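(* Let $B$ be a C*-algebra and let $A$ be a closed *-subalgebra of $B$ satisfying the ideal intersection property and axiom (inv) relative to $B$. Let $\mathscr{R}(B)$ be the family of all regular ideals of $B$, and $\mathscr{R}_{\mathrm{inv}}(A)$ the family of all regular, $B$-invariant ideals of $A$. Then the map $$\alpha: J\in\mathscr{R}(B)\mapsto J\cap A\in\mathscr{R}_{\mathrm{inv}}(A)$$ is well defined and is a boolean algebra isomorphism (an inclusion-preserving bijection with inclusion-preserving inverse), and its inverse is given by $$\beta: I\in\mathscr{R}_{\mathrm{inv}}(A)\mapsto \mathrm{Ann}_B(\mathrm{Ann}_B(I))\in\mathscr{R}(B).$$
   Context: Ideals are closed two-sided ideals. For a C*-algebra $C$ and $S\subseteq C$, $[S]$ is the closed linear span, and $S$ is $C$-invariant if $[SC]=[CS]$. For $C$-invariant $S$, $\{x\in C: xs=0\ \forall s\in S\}=\{x\in C: sx=0\ \forall s\in S\}$, denoted $\mathrm{Ann}_C(S)$ (every ideal of $C$ is $C$-invariant). An ideal $J$ of $C$ is regular if $\mathrm{Ann}_C(\mathrm{Ann}_C(J))=J$. Regular ideals of $C$ form a boolean algebra with order given by inclusion, meet $J_1\cap J_2$, join $\mathrm{Ann}_C(\mathrm{Ann}_C(J_1+J_2))$ and negation $\mathrm{Ann}_C(J)$. $A$ satisfies the ideal intersection property relative to $B$ if $J\cap A\neq\{0\}$ for every nonzero ideal $J$ of $B$; $A$ satisfies axiom (inv) relative to $B$ if $J\cap A$ is $B$-invariant for every ideal $J$ of $B$. *)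

theory Defs
  imports "HOL-Analysis.Analysis"
begin

class cstar_algebra = real_normed_algebra + banach +
  fixes scaleC :: "complex \<Rightarrow> 'a \<Rightarrow> 'a"
    and adj :: "'a \<Rightarrow> 'a"
  assumes scaleC_scaleR: "scaleC (complex_of_real r) x = scaleR r x"
    and scaleC_add_right: "scaleC a (x + y) = scaleC a x + scaleC a y"
    and scaleC_add_left: "scaleC (a + b) x = scaleC a x + scaleC b x"
    and scaleC_scaleC: "scaleC a (scaleC b x) = scaleC (a * b) x"
    and scaleC_one: "scaleC 1 x = x"
    and norm_scaleC: "norm (scaleC a x) = cmod a * norm x"
    and mult_scaleC_left: "scaleC a x * y = scaleC a (x * y)"
    and mult_scaleC_right: "x * scaleC a y = scaleC a (x * y)"
    and adj_adj: "adj (adj x) = x"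
    and adj_add: "adj (x + y) = adj x + adj y"
    and adj_mult: "adj (x * y) = adj y * adj x"
    and adj_scaleC: "adj (scaleC a x) = scaleC (cnj a) (adj x)"
    and cstar_identity: "norm (adj x * x) = (norm x)\<^sup>2"

definition cspan :: "'a::cstar_algebra set \<Rightarrow> 'a set" where
  "cspan S = {x. \<exists>F c. finite F \<and> F \<subseteq> S \<and> x = (\<Sum>s\<in>F. scaleC (c s) s)}"

definition clspan :: "'a::cstar_algebra set \<Rightarrow> 'a set" where
  "clspan S = closure (cspan S)"

definition setprod :: "'a::cstar_algebra set \<Rightarrow> 'a set \<Rightarrow> 'a set" where
  "setprod S T = {s * t | s t. s \<in> S \<and> t \<in> T}"

definition invariant :: "'a::cstar_algebra set \<Rightarrow> 'a set \<Rightarrow> bool" where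
  "invariant C S \<longleftrightarrow> clspan (setprod S C) = clspan (setprod C S)"

definition Ann :: "'a::cstar_algebra set \<Rightarrow> 'a set \<Rightarrow> 'a set" where
  "Ann C S = {x \<in> C. \<forall>s\<in>S. x * s = 0}"

definition cstar_subalgebra :: "'a::cstar_algebra set \<Rightarrow> bool" where
  "cstar_subalgebra A \<longleftrightarrow> closed A \<and> 0 \<in> A \<and>
     (\<forall>x\<in>A. \<forall>y\<in>A. x + y \<in> A \<and> x * y \<in> A) \<and>
     (\<forall>a. \<forall>x\<in>A. scaleC a x \<in> A) \<and> (\<forall>x\<in>A. adj x \<in> A)"

definition is_ideal :: "'a::cstar_algebra set \<Rightarrow> 'a set \<Rightarrow> bool" where
  "is_ideal C J \<longleftrightarrow> J \<subseteq> C \<and> closed J \<and> 0 \<in> J \<and>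
     (\<forall>x\<in>J. \<forall>y\<in>J. x + y \<in> J) \<and> (\<forall>a. \<forall>x\<in>J. scaleC a x \<in> J) \<and>
     (\<forall>j\<in>J. \<forall>c\<in>C. j * c \<in> J \<and> c * j \<in> J)"

definition regular_ideal :: "'a::cstar_algebra set \<Rightarrow> 'a set \<Rightarrow> bool" where
  "regular_ideal C J \<longleftrightarrow> is_ideal C J \<and> Ann C (Ann C J) = J"

text \<open>Relative to B = UNIV.\<close>
definition ideal_intersection_property :: "'a::cstar_algebra set \<Rightarrow> bool" where
  "ideal_intersection_property A \<longleftrightarrow>
     (\<forall>J. is_ideal UNIV J \<and> J \<noteq> {0} \<longrightarrow> J \<inter> A \<noteq> {0})"

definition axiom_inv :: "'a::cstar_algebra set \<Rightarrow> bool" where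
  "axiom_inv A \<longleftrightarrow> (\<forall>J. is_ideal UNIV J \<longrightarrow> invariant UNIV (J \<inter> A))"

definition regular_ideals_B :: "'a::cstar_algebra set set" where
  "regular_ideals_B = {J. regular_ideal UNIV J}"

definition regular_inv_ideals :: "'a::cstar_algebra set \<Rightarrow> 'a set set" where
  "regular_inv_ideals A = {I. regular_ideal A I \<and> invariant UNIV I}"

end

theory Submission
  imports Defs
begin

lemma scaleC_zero_right: "scaleC a (0::'a::cstar_algebra) = 0"
  using norm_scaleC[of a "0::'a"] by simp

lemma adj_zero: "adj (0::'a::cstar_algebra) = 0"
  using adj_add[of "0::'a" 0] by simp

lemma adj_x_x_zero: "adj x * (x::'a::cstar_algebra) = 0 \<Longrightarrow> x = 0"
  using cstar_identity[of x] by simp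

lemma x_adj_x_zero: "(x::'a::cstar_algebra) * adj x = 0 \<Longrightarrow> x = 0"
  using adj_x_x_zero[of "adj x"] adj_adj[of x] adj_zero by metis

lemma closed_ann_pt: "closed {w::'a::cstar_algebra. x * w = 0}"
  by (rule closed_Collect_eq) (auto intro: continuous_intros)

lemma closed_ann_pt2: "closed {w::'a::cstar_algebra. w * s = 0}"
  by (rule closed_Collect_eq) (auto intro: continuous_intros)

lemma span_ann:
  fixes x :: "'a::cstar_algebra"
  assumes "\<forall>t\<in>T. x * t = 0" "w \<in> clspan T"
  shows "x * w = 0"
proof -
  have "cspan T \<subseteq> {w. x * w = 0}"
  proof
    fix v assume "v \<in> cspan T"
    then obtain F c where F: "finite F" "F \<subseteq> T" "v = (\<Sum>s\<in>F. scaleC (c s) s)"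
      unfolding cspan_def by auto
    have "x * v = (\<Sum>s\<in>F. x * scaleC (c s) s)" using F by (simp add: sum_distrib_left)
    also have "\<dots> = (\<Sum>s\<in>F. scaleC (c s) (x * s))" by (simp add: mult_scaleC_right)
    also have "\<dots> = 0" using F assms(1) by (auto simp: scaleC_zero_right intro!: sum.neutral)
    finally show "v \<in> {w. x * w = 0}" by simp
  qed
  then have "closure (cspan T) \<subseteq> {w. x * w = 0}"
    using closed_ann_pt closure_minimal by blast
  then show ?thesis using assms(2) unfolding clspan_def by auto
qed

lemma closed_Ann: "closed (Ann UNIV (S::'a::cstar_algebra set))"
proof -
  have "Ann UNIV S = (\<Inter>s\<in>S. {w. w * s = 0})" unfolding Ann_def by auto
  then show ?thesis using closed_ann_pt2 by auto
qed

lemma Ann_ideal: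
  fixes S :: "'a::cstar_algebra set"
  assumes "\<And>x c s. x \<in> Ann UNIV S \<Longrightarrow> s \<in> S \<Longrightarrow> x * (c * s) = 0"
  shows "is_ideal UNIV (Ann UNIV S)"
  unfolding is_ideal_def
proof (intro conjI ballI allI)
  show "closed (Ann UNIV S)" by (rule closed_Ann)
  show "0 \<in> Ann UNIV S" unfolding Ann_def by auto
  fix x y assume "x \<in> Ann UNIV S" "y \<in> Ann UNIV S"
  then show "x + y \<in> Ann UNIV S" unfolding Ann_def by (auto simp: distrib_right)
next
  fix a x assume "x \<in> Ann UNIV (S::'a set)"
  then show "scaleC a x \<in> Ann UNIV S" unfolding Ann_def
    by (auto simp: mult_scaleC_left scaleC_zero_right)
next
  fix j c assume j: "j \<in> Ann UNIV (S::'a set)" and "c \<in> (UNIV::'a set)"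
  show "j * c \<in> Ann UNIV S" using assms[OF j] unfolding Ann_def by (auto simp: mult.assoc)
  show "c * j \<in> Ann UNIV S" using j unfolding Ann_def by (auto simp: mult.assoc)
qed auto

lemma Ann_ideal_of_ideal:
  assumes "is_ideal UNIV (J::'a::cstar_algebra set)"
  shows "is_ideal UNIV (Ann UNIV J)"
  by (rule Ann_ideal) (use assms in \<open>auto simp: Ann_def is_ideal_def\<close>)

lemma Ann_ideal_of_inv:
  assumes "invariant UNIV (S::'a::cstar_algebra set)"
  shows "is_ideal UNIV (Ann UNIV S)"
proof (rule Ann_ideal)
  fix x c s assume x: "x \<in> Ann UNIV S" and s: "s \<in> S"
  have "c * s \<in> setprod UNIV S" unfolding setprod_def using s by auto
  then have "c * s \<in> clspan (setprod UNIV S)" unfolding clspan_def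
  proof -
    assume "c * s \<in> setprod UNIV S"
    then have "c * s \<in> cspan (setprod UNIV S)" unfolding cspan_def
      by (intro CollectI exI[of _ "{c * s}"] exI[of _ "\<lambda>_. 1"]) (auto simp: scaleC_one)
    then show "c * s \<in> closure (cspan (setprod UNIV S))" using closure_subset by blast
  qed
  then have cs: "c * s \<in> clspan (setprod S UNIV)" using assms unfolding invariant_def by simp
  have "\<forall>t\<in>setprod S UNIV. x * t = 0"
    using x unfolding setprod_def Ann_def by (auto simp: mult.assoc[symmetric])
  then show "x * (c * s) = 0" using span_ann cs by blast
qed

lemma SYM:
  fixes S K :: "'a::cstar_algebra set"
  assumes S: "\<And>s. s \<in> S \<Longrightarrow> adj s * s \<in> S"
    and K: "is_ideal UNIV K"
    and KS: "\<And>k s. k \<in> K \<Longrightarrow> s \<in> S \<Longrightarrow> k * s = 0"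
    and s: "s \<in> S" and k: "k \<in> K"
  shows "s * k = 0"
proof -
  have k': "k * adj k \<in> K" using K k unfolding is_ideal_def by auto
  have z: "s * (k * adj k) \<in> K" using K k' unfolding is_ideal_def by auto
  let ?z = "s * (k * adj k)"
  have "?z * (adj s * s) = 0" using KS[OF z S[OF s]] .
  moreover have "(?z * adj s) * adj (?z * adj s) = (?z * (adj s * s)) * adj ?z"
    by (simp only: adj_mult adj_adj mult.assoc)
  ultimately have "(?z * adj s) * adj (?z * adj s) = 0" by simp
  then have "?z * adj s = 0" by (rule x_adj_x_zero)
  then have "(s * k) * adj (s * k) = 0" by (simp add: adj_mult mult.assoc)
  then show ?thesis by (rule x_adj_x_zero)
qed

lemma ideal_star: "is_ideal UNIV J \<Longrightarrow> s \<in> J \<Longrightarrow> adj s * s \<in> J"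
  unfolding is_ideal_def by auto

lemma Ann_anti: "S \<subseteq> T \<Longrightarrow> Ann C T \<subseteq> Ann C S"
  unfolding Ann_def by auto

lemma sub_AnnAnn:
  assumes S: "\<And>s. s \<in> S \<Longrightarrow> adj s * s \<in> S"
    and K: "is_ideal UNIV (Ann UNIV (S::'a::cstar_algebra set))"
  shows "S \<subseteq> Ann UNIV (Ann UNIV S)"
proof
  fix s assume s: "s \<in> S"
  have "\<forall>k\<in>Ann UNIV S. s * k = 0"
    using SYM[OF S K _ s] unfolding Ann_def by auto
  then show "s \<in> Ann UNIV (Ann UNIV S)" unfolding Ann_def by auto
qed

lemma Ann_A: "Ann A S = Ann UNIV S \<inter> A"
  unfolding Ann_def by auto

lemma ideal_inter: "is_ideal UNIV J \<Longrightarrow> is_ideal UNIV K \<Longrightarrow> is_ideal UNIV (J \<inter> (K::'a::cstar_algebra set))"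
  unfolding is_ideal_def by auto

lemma L1:
  fixes A J :: "'a::cstar_algebra set"
  assumes A: "cstar_subalgebra A" and iip: "ideal_intersection_property A"
    and J: "is_ideal UNIV J" and inv: "invariant UNIV (J \<inter> A)"
  shows "Ann UNIV (J \<inter> A) = Ann UNIV J"
proof
  show "Ann UNIV J \<subseteq> Ann UNIV (J \<inter> A)" by (rule Ann_anti) auto
  let ?N = "Ann UNIV (J \<inter> A)"
  have N: "is_ideal UNIV ?N" using Ann_ideal_of_inv[OF inv] .
  let ?M = "?N \<inter> J"
  have M: "is_ideal UNIV ?M" using ideal_inter[OF N J] .
  have MA: "?M \<inter> A = {0}"
  proof (rule set_eqI, rule iffI)
    fix y assume y: "y \<in> ?M \<inter> A"
    let ?x = "adj y * y"
    have "adj y \<in> A" using y A unfolding cstar_subalgebra_def by auto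
    then have xA: "?x \<in> A" using y A unfolding cstar_subalgebra_def by auto
    have xJ: "?x \<in> J" using y J unfolding is_ideal_def by auto
    have "y * ?x = 0" using y xA xJ unfolding Ann_def by auto
    then have "adj ?x * ?x = 0" by (simp add: adj_mult adj_adj mult.assoc)
    then have "?x = 0" by (rule adj_x_x_zero)
    then show "y \<in> {0}" using adj_x_x_zero by auto
  next
    fix y assume "y \<in> {0::'a}"
    then show "y \<in> ?M \<inter> A" using M A unfolding is_ideal_def cstar_subalgebra_def by auto
  qed
  have M0: "?M = {0}" using iip M MA unfolding ideal_intersection_property_def by auto
  show "?N \<subseteq> Ann UNIV J"
  proof
    fix x assume x: "x \<in> ?N"
    have "\<forall>j\<in>J. x * j = 0"
    proof
      fix j assume j: "j \<in> J"
      have "x * j \<in> ?N" using N x unfolding is_ideal_def by auto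
      moreover have "x * j \<in> J" using J j unfolding is_ideal_def by auto
      ultimately show "x * j = 0" using M0 by auto
    qed
    then show "x \<in> Ann UNIV J" unfolding Ann_def by auto
  qed
qed

theorem theorem3p5:
  fixes A :: "'a::cstar_algebra set"
  assumes "cstar_subalgebra A"
    and "ideal_intersection_property A"
    and "axiom_inv A"
  shows "(\<forall>J\<in>regular_ideals_B. J \<inter> A \<in> regular_inv_ideals A)
    \<and> bij_betw (\<lambda>J. J \<inter> A) regular_ideals_B (regular_inv_ideals A)
    \<and> (\<forall>J1\<in>regular_ideals_B. \<forall>J2\<in>regular_ideals_B. J1 \<subseteq> J2 \<longleftrightarrow> J1 \<inter> A \<subseteq> J2 \<inter> A)
    \<and> (\<forall>I\<in>regular_inv_ideals A.
         Ann UNIV (Ann UNIV I) \<in> regular_ideals_B \<and> Ann UNIV (Ann UNIV I) \<inter> A = I)"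
proof -
  note A = assms(1) and iip = assms(2)
  have inv: "\<And>J::'a set. is_ideal UNIV J \<Longrightarrow> invariant UNIV (J \<inter> A)"
    using assms(3) unfolding axiom_inv_def by auto
  have L: "\<And>J::'a set. is_ideal UNIV J \<Longrightarrow> Ann UNIV (J \<inter> A) = Ann UNIV J"
    using L1[OF A iip] inv by auto
  have P1: "\<forall>J\<in>regular_ideals_B. J \<inter> A \<in> regular_inv_ideals A"
  proof
    fix J :: "'a set" assume "J \<in> regular_ideals_B"
    then have J: "is_ideal UNIV J" and JJ: "Ann UNIV (Ann UNIV J) = J"
      unfolding regular_ideals_B_def regular_ideal_def by auto
    have K: "is_ideal UNIV (Ann UNIV J)" using Ann_ideal_of_ideal[OF J] .
    have idA: "is_ideal A (J \<inter> A)"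
      using J A unfolding is_ideal_def cstar_subalgebra_def by (auto intro: closed_Int)
    have "Ann A (Ann A (J \<inter> A)) = Ann UNIV (Ann UNIV J \<inter> A) \<inter> A"
      by (simp add: Ann_A[of A] L[OF J])
    also have "\<dots> = J \<inter> A" by (simp add: L[OF K] JJ)
    finally show "J \<inter> A \<in> regular_inv_ideals A"
      unfolding regular_inv_ideals_def regular_ideal_def using idA inv[OF J] by auto
  qed
  have P3: "\<forall>J1\<in>regular_ideals_B. \<forall>J2\<in>regular_ideals_B. J1 \<subseteq> J2 \<longleftrightarrow> J1 \<inter> A \<subseteq> J2 \<inter> A"
  proof (intro ballI iffI)
    fix J1 J2 :: "'a set" assume "J1 \<in> regular_ideals_B" "J2 \<in> regular_ideals_B" "J1 \<inter> A \<subseteq> J2 \<inter> A"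
    then have J1: "is_ideal UNIV J1" "Ann UNIV (Ann UNIV J1) = J1"
      and J2: "is_ideal UNIV J2" "Ann UNIV (Ann UNIV J2) = J2"
      and s: "J1 \<inter> A \<subseteq> J2 \<inter> A"
      unfolding regular_ideals_B_def regular_ideal_def by auto
    have "Ann UNIV J2 \<subseteq> Ann UNIV J1"
      using Ann_anti[OF s, of UNIV] L[OF J1(1)] L[OF J2(1)] by simp
    then have "Ann UNIV (Ann UNIV J1) \<subseteq> Ann UNIV (Ann UNIV J2)" by (rule Ann_anti)
    then show "J1 \<subseteq> J2" using J1 J2 by simp
  qed auto
  have P4: "\<forall>I\<in>regular_inv_ideals A.
         Ann UNIV (Ann UNIV I) \<in> regular_ideals_B \<and> Ann UNIV (Ann UNIV I) \<inter> A = I"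
  proof
    fix I :: "'a set" assume "I \<in> regular_inv_ideals A"
    then have I: "is_ideal A I" "Ann A (Ann A I) = I" and Iinv: "invariant UNIV I"
      unfolding regular_inv_ideals_def regular_ideal_def by auto
    have N: "is_ideal UNIV (Ann UNIV I)" using Ann_ideal_of_inv[OF Iinv] .
    have NN: "is_ideal UNIV (Ann UNIV (Ann UNIV I))" using Ann_ideal_of_ideal[OF N] .
    have NNN: "is_ideal UNIV (Ann UNIV (Ann UNIV (Ann UNIV I)))" using Ann_ideal_of_ideal[OF NN] .
    have s1: "Ann UNIV I \<subseteq> Ann UNIV (Ann UNIV (Ann UNIV I))"
      by (rule sub_AnnAnn[OF ideal_star[OF N] NN])
    have s2: "Ann UNIV (Ann UNIV (Ann UNIV (Ann UNIV I))) \<subseteq> Ann UNIV (Ann UNIV I)"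
      by (rule Ann_anti[OF s1])
    have s3: "Ann UNIV (Ann UNIV I) \<subseteq> Ann UNIV (Ann UNIV (Ann UNIV (Ann UNIV I)))"
      by (rule sub_AnnAnn[OF ideal_star[OF NN] NNN])
    have reg: "Ann UNIV (Ann UNIV I) \<in> regular_ideals_B"
      unfolding regular_ideals_B_def regular_ideal_def using NN s2 s3 by auto
    have "I = Ann UNIV (Ann UNIV I \<inter> A) \<inter> A" using I(2) by (simp add: Ann_A[of A])
    also have "\<dots> = Ann UNIV (Ann UNIV I) \<inter> A" by (simp add: L[OF N])
    finally show "Ann UNIV (Ann UNIV I) \<in> regular_ideals_B \<and> Ann UNIV (Ann UNIV I) \<inter> A = I"
      using reg by simp
  qed
  have P2: "bij_betw (\<lambda>J. J \<inter> A) regular_ideals_B (regular_inv_ideals A)"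
  proof (rule bij_betw_imageI)
    show "inj_on (\<lambda>J. J \<inter> A) regular_ideals_B"
    proof (rule inj_onI)
      fix x y assume "x \<in> regular_ideals_B" "y \<in> regular_ideals_B" "x \<inter> A = y \<inter> A"
      then show "x = y" using P3 by (metis order_refl subset_antisym)
    qed
    show "(\<lambda>J. J \<inter> A) ` regular_ideals_B = regular_inv_ideals A"
    proof
      show "(\<lambda>J. J \<inter> A) ` regular_ideals_B \<subseteq> regular_inv_ideals A" using P1 by auto
      show "regular_inv_ideals A \<subseteq> (\<lambda>J. J \<inter> A) ` regular_ideals_B"
      proof
        fix I :: "'a set" assume "I \<in> regular_inv_ideals A"
        then have "Ann UNIV (Ann UNIV I) \<in> regular_ideals_B" "I = Ann UNIV (Ann UNIV I) \<inter> A"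
          using P4 by auto
        then show "I \<in> (\<lambda>J. J \<inter> A) ` regular_ideals_B" by (rule rev_image_eqI)
      qed
    qed
  qed
  show ?thesis using P1 P2 P3 P4 by (intro conjI)
qed

end
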